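(* In the Bayesian offline learning setting for $n$-round dynamic inference described in the context, let $\psi_m^n$ be any offline-learned estimation strategy. Then $$\mathbb P\big[(\pi_m,X_{i+1})\in A\times B\mid\pi_m,X^i,\hat Y^i\big]=\mathbf 1\{\pi_m\in A\}\,\mathbb P\big[X_{i+1}\in B\mid X_i,\hat Y_i\big]$$ for any Borel sets $A\subset\Delta$ and $B\subset\mathsf X$, any realization of $(\pi_m,X^i,\hat Y^i)$, and any $i=1,\ldots,n-1$. In other words, $(\pi_m,X_i)_{i=1}^n$ is a controlled Markov chain with control sequence $\hat Y^n$.
   Context: Setting (Bayesian offline learning for $n$-round dynamic inference). $\mathsf X,\mathsf Y,\hat{\mathsf Y},\mathsf W$ are measurable spaces and $\Delta$ is the space of probability distributions on $\mathsf W$. The following are given: a distribution $P_{X_1}$ on $\mathsf X$; probability transition kernels $K_i(\cdot\mid x,\hat y)$ from $\mathsf X\times\hat{\mathsf Y}$ to $\mathsf X$ for $i=2,\ldots,n$; a parametrized family of kernels $\{P_{Y|X,w}:w\in\mathsf W\}$ from $\mathsf X$ to $\mathsf Y$; a prior $P_W$ on $\mathsf W$; a conditional distribution $P_{Z^m|W}$ of an $m$-sample training dataset $Z^m$ with values in $(\mathsf X\times\hat{\mathsf Y})^m$; and a loss $\ell$. An offline-learned estimation strategy is a tuple $\psi_m^n=(\psi_{m,1},\ldots,\psi_{m,n})$ of maps $\psi_{m,i}:(\mathsf X\times\hat{\mathsf Y})^m\times\mathsf X^i\times\hat{\mathsf Y}^{i-1}\to\hat{\mathsf Y}$. It determines the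 joint law of $(W,Z^m,X^n,Y^n,\hat Y^n)$ as follows. $W\sim P_W$, and $Z^m\mid W\sim P_{Z^m|W}$. $X_1\sim P_{X_1}$ is independent of $(W,Z^m)$. For each $i$: given all previously generated variables, $Y_i\sim P_{Y|X,W}(\cdot\mid X_i,W)$; $\hat Y_i=\psi_{m,i}(Z^m,X^i,\hat Y^{i-1})$; and, given all variables generated up to round $i$, $X_{i+1}\sim K_{i+1}(\cdot\mid X_i,\hat Y_i)$. Let $\pi_m(\cdot)=\mathbb P[W\in\cdot\mid Z^m]$. *)

theory Defs
  imports "HOL-Probability.Probability"
begin

definition gen_alg :: "'a measure \<Rightarrow> ('a \<Rightarrow> 'b) \<Rightarrow> 'b measure \<Rightarrow> 'a measure" where
  "gen_alg M f N = vimage_algebra (space M) f N"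

definition cond_prob :: "'a measure \<Rightarrow> 'a measure \<Rightarrow> 'a set \<Rightarrow> 'a \<Rightarrow> real" where
  "cond_prob M F E = real_cond_exp M F (indicator E)"

end

theory Submission
  imports Defs
begin

lemma sfs_vimage:
  assumes "prob_space M" "h \<in> measurable M N"
  shows "sigma_finite_subalgebra M (vimage_algebra (space M) h N)"
proof -
  interpret prob_space M by fact
  have "subalgebra M (vimage_algebra (space M) h N)"
    unfolding subalgebra_def using sets_image_in_sets[OF refl assms(2)] by simp
  then have "finite_measure_subalgebra M (vimage_algebra (space M) h N)"
    by (intro finite_measure_subalgebra.intro finite_measure_subalgebra_axioms.intro) (auto intro: finite_measure_axioms)
  then show ?thesis by (rule finite_measure_subalgebra_is_sigma_finite)
qed

lemma vimage_meas:
  assumes "h \<in> measurable M N" "\<phi> \<in> measurable N R" "\<And>\<omega>. \<omega> \<in> space M \<Longrightarrow> q \<omega> = \<phi> (h \<omega>)"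
  shows "q \<in> measurable (vimage_algebra (space M) h N) R"
proof -
  have "h \<in> measurable (vimage_algebra (space M) h N) N"
    using assms(1) by (intro measurable_vimage_algebra1) (auto simp: measurable_def)
  then have "(\<lambda>\<omega>. \<phi> (h \<omega>)) \<in> measurable (vimage_algebra (space M) h N) R"
    using assms(2) by (rule measurable_compose)
  then show ?thesis by (rule measurable_cong[THEN iffD1, rotated]) (simp add: assms(3))
qed

lemma vimage_sub:
  assumes "g \<in> measurable (vimage_algebra (space M) h N) R"
  shows "sets (vimage_algebra (space M) g R) \<subseteq> sets (vimage_algebra (space M) h N)"
  using sets_image_in_sets[OF _ assms] by simp

lemma key:
  assumes "sigma_finite_subalgebra M G" "sigma_finite_subalgebra M H" "sets G \<subseteq> sets H"
    and M: "prob_space M" and E: "E \<in> sets M"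
    and AEk: "AE x in M. real_cond_exp M H (indicator E) x = k x"
    and km: "k \<in> borel_measurable G" and D: "D \<in> sets G"
  shows "AE x in M. real_cond_exp M G (\<lambda>x. indicator D x * indicator E x) x = indicator D x * k x"
proof -
  interpret G: sigma_finite_subalgebra M G by fact
  interpret H: sigma_finite_subalgebra M H by fact
  interpret prob_space M by fact
  have DM: "D \<in> sets M" using D G.subalg unfolding subalgebra_def by auto
  have kM: "k \<in> borel_measurable M" using km by (rule measurable_from_subalg[OF G.subalg])
  have iE: "integrable M (indicator E :: _ \<Rightarrow> real)" using E by (intro integrable_real_indicator) (auto simp: less_top[symmetric])
  have rceM: "real_cond_exp M H (indicator E) \<in> borel_measurable M" by simp
  have ik: "integrable M k"
    using integrable_cong_AE[OF rceM kM AEk] H.real_cond_exp_int(1)[OF iE] by simp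
  have eq1: "(\<lambda>x. indicator D x * indicator E x) = (indicator (D \<inter> E) :: _ \<Rightarrow> real)"
    by (auto simp: indicator_def)
  show ?thesis
  proof (rule G.real_cond_exp_charact)
    show "integrable M (\<lambda>x. indicator D x * indicator E x :: real)" using integrable_mult_indicator[OF DM iE] by simp
    show "integrable M (\<lambda>x. indicator D x * k x)"
      using integrable_mult_indicator[OF DM ik] by simp
    show "(\<lambda>x. indicator D x * k x) \<in> borel_measurable G" using km D by measurable
    fix A assume A: "A \<in> sets G"
    then have ADH: "A \<inter> D \<in> sets H" using D assms(3) by auto
    have ADM: "A \<inter> D \<in> sets M" using ADH H.subalg unfolding subalgebra_def by auto
    have "(\<integral>x\<in>A. (indicator D x * indicator E x :: real) \<partial>M) = (\<integral>x\<in>A \<inter> D. indicator E x \<partial>M)"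
      unfolding set_lebesgue_integral_def by (intro Bochner_Integration.integral_cong) (auto simp: indicator_def)
    also have "\<dots> = (\<integral>x\<in>A \<inter> D. real_cond_exp M H (indicator E) x \<partial>M)"
      by (rule H.real_cond_exp_intA[OF iE ADH])
    also have "\<dots> = (\<integral>x\<in>A \<inter> D. k x \<partial>M)"
      unfolding set_lebesgue_integral_def
      by (intro integral_cong_AE) (use ADM rceM kM AEk in auto)
    also have "\<dots> = (\<integral>x\<in>A. indicator D x * k x \<partial>M)"
      unfolding set_lebesgue_integral_def by (intro Bochner_Integration.integral_cong) (auto simp: indicator_def)
    finally show "(\<integral>x\<in>A. (indicator D x * indicator E x :: real) \<partial>M) = (\<integral>x\<in>A. indicator D x * k x \<partial>M)" .
  qed
qed

theorem lemma2:
  fixes M :: "'a measure"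
    and Xs :: "'x measure" and Ys :: "'y measure" and Yhs :: "'yh measure" and Ws :: "'w measure"
    and n m :: nat
    and PX1 :: "'x measure"
    and K :: "nat \<Rightarrow> 'x \<times> 'yh \<Rightarrow> 'x measure"
    and PY :: "'w \<Rightarrow> 'x \<Rightarrow> 'y measure"
    and PW :: "'w measure"
    and PZW :: "'w \<Rightarrow> (nat \<Rightarrow> 'x \<times> 'yh) measure"
    and \<psi> :: "nat \<Rightarrow> (nat \<Rightarrow> 'x \<times> 'yh) \<Rightarrow> (nat \<Rightarrow> 'x) \<Rightarrow> (nat \<Rightarrow> 'yh) \<Rightarrow> 'yh"
    and W :: "'a \<Rightarrow> 'w" and Z :: "'a \<Rightarrow> (nat \<Rightarrow> 'x \<times> 'yh)"
    and X :: "nat \<Rightarrow> 'a \<Rightarrow> 'x" and Y :: "nat \<Rightarrow> 'a \<Rightarrow> 'y" and Yh :: "nat \<Rightarrow> 'a \<Rightarrow> 'yh"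
    and \<pi> :: "'a \<Rightarrow> 'w measure"
  defines "Zsp \<equiv> PiM {1..m} (\<lambda>_. Xs \<Otimes>\<^sub>M Yhs)"
  assumes M: "prob_space M"
    \<comment> \<open>the given model primitives\<close>
    and PX1: "prob_space PX1" "sets PX1 = sets Xs"
    and K: "\<And>i. i \<in> {2..n} \<Longrightarrow> K i \<in> measurable (Xs \<Otimes>\<^sub>M Yhs) (prob_algebra Xs)"
    and PY: "(\<lambda>(x, w). PY w x) \<in> measurable (Xs \<Otimes>\<^sub>M Ws) (prob_algebra Ys)"
    and PW: "prob_space PW" "sets PW = sets Ws"
    and PZW: "PZW \<in> measurable Ws (prob_algebra Zsp)"
    \<comment> \<open>the offline-learned estimation strategy (measurable maps)\<close>
    and psi: "\<And>i. i \<in> {1..n} \<Longrightarrow>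
       (\<lambda>(z, xs, ys). \<psi> i z xs ys) \<in>
         measurable (Zsp \<Otimes>\<^sub>M PiM {1..i} (\<lambda>_. Xs) \<Otimes>\<^sub>M PiM {1..<i} (\<lambda>_. Yhs)) Yhs"
    \<comment> \<open>the random variables\<close>
    and W: "W \<in> measurable M Ws" and Z: "Z \<in> measurable M Zsp"
    and X: "\<And>i. i \<in> {1..n} \<Longrightarrow> X i \<in> measurable M Xs"
    and Y: "\<And>i. i \<in> {1..n} \<Longrightarrow> Y i \<in> measurable M Ys"
    and Yh: "\<And>i. i \<in> {1..n} \<Longrightarrow> Yh i \<in> measurable M Yhs"
    \<comment> \<open>W ~ P_W and Z^m | W ~ P_{Z^m|W}\<close>
    and WZ: "distr M (Ws \<Otimes>\<^sub>M Zsp) (\<lambda>\<omega>. (W \<omega>, Z \<omega>)) =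
             PW \<bind> (\<lambda>w. distr (PZW w) (Ws \<Otimes>\<^sub>M Zsp) (\<lambda>z. (w, z)))"
    \<comment> \<open>X_1 ~ P_X1, independent of (W, Z^m)\<close>
    and X1: "distr M Xs (X 1) = PX1"
    and X1indep: "distr M (Xs \<Otimes>\<^sub>M (Ws \<Otimes>\<^sub>M Zsp)) (\<lambda>\<omega>. (X 1 \<omega>, W \<omega>, Z \<omega>)) =
             distr M Xs (X 1) \<Otimes>\<^sub>M distr M (Ws \<Otimes>\<^sub>M Zsp) (\<lambda>\<omega>. (W \<omega>, Z \<omega>))"
    \<comment> \<open>Y_i | (W, Z^m, X^i, Y^{i-1}, Yh^{i-1}) ~ P_{Y|X,W}(. | X_i, W)\<close>
    and Ylaw: "\<And>i C. i \<in> {1..n} \<Longrightarrow> C \<in> sets Ys \<Longrightarrow>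
       AE \<omega> in M. cond_prob M
          (gen_alg M (\<lambda>\<omega>. (W \<omega>, Z \<omega>, restrict (\<lambda>j. X j \<omega>) {1..i},
                             restrict (\<lambda>j. Y j \<omega>) {1..<i}, restrict (\<lambda>j. Yh j \<omega>) {1..<i}))
             (Ws \<Otimes>\<^sub>M Zsp \<Otimes>\<^sub>M PiM {1..i} (\<lambda>_. Xs) \<Otimes>\<^sub>M PiM {1..<i} (\<lambda>_. Ys)
                \<Otimes>\<^sub>M PiM {1..<i} (\<lambda>_. Yhs)))
          {\<omega> \<in> space M. Y i \<omega> \<in> C} \<omega>
        = measure (PY (W \<omega>) (X i \<omega>)) C"
    \<comment> \<open>Yh_i = psi_i(Z^m, X^i, Yh^{i-1})\<close>
    and Yhdef: "\<And>i \<omega>. i \<in> {1..n} \<Longrightarrow> \<omega> \<in> space M \<Longrightarrow>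
       Yh i \<omega> = \<psi> i (Z \<omega>) (restrict (\<lambda>j. X j \<omega>) {1..i}) (restrict (\<lambda>j. Yh j \<omega>) {1..<i})"
    \<comment> \<open>X_{i+1} | (W, Z^m, X^i, Y^i, Yh^i) ~ K_{i+1}(. | X_i, Yh_i)\<close>
    and Xlaw: "\<And>i B. i \<in> {1..<n} \<Longrightarrow> B \<in> sets Xs \<Longrightarrow>
       AE \<omega> in M. cond_prob M
          (gen_alg M (\<lambda>\<omega>. (W \<omega>, Z \<omega>, restrict (\<lambda>j. X j \<omega>) {1..i},
                             restrict (\<lambda>j. Y j \<omega>) {1..i}, restrict (\<lambda>j. Yh j \<omega>) {1..i}))
             (Ws \<Otimes>\<^sub>M Zsp \<Otimes>\<^sub>M PiM {1..i} (\<lambda>_. Xs) \<Otimes>\<^sub>M PiM {1..i} (\<lambda>_. Ys)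
                \<Otimes>\<^sub>M PiM {1..i} (\<lambda>_. Yhs)))
          {\<omega> \<in> space M. X (Suc i) \<omega> \<in> B} \<omega>
        = measure (K (Suc i) (X i \<omega>, Yh i \<omega>)) B"
    \<comment> \<open>pi_m = P[W \<in> . | Z^m]: a sigma(Z^m)-measurable version of the posterior\<close>
    and pi_fun: "\<exists>g \<in> measurable Zsp (prob_algebra Ws). \<forall>\<omega> \<in> space M. \<pi> \<omega> = g (Z \<omega>)"
    and pi_post: "\<And>C. C \<in> sets Ws \<Longrightarrow>
       AE \<omega> in M. measure (\<pi> \<omega>) C = cond_prob M (gen_alg M Z Zsp) {\<omega> \<in> space M. W \<omega> \<in> C} \<omega>"
  shows "\<forall>i \<in> {1..<n}. \<forall>A \<in> sets (prob_algebra Ws). \<forall>B \<in> sets Xs.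
       AE \<omega> in M.
         cond_prob M
           (gen_alg M (\<lambda>\<omega>. (\<pi> \<omega>, restrict (\<lambda>j. X j \<omega>) {1..i}, restrict (\<lambda>j. Yh j \<omega>) {1..i}))
              (prob_algebra Ws \<Otimes>\<^sub>M PiM {1..i} (\<lambda>_. Xs) \<Otimes>\<^sub>M PiM {1..i} (\<lambda>_. Yhs)))
           {\<omega> \<in> space M. \<pi> \<omega> \<in> A \<and> X (Suc i) \<omega> \<in> B} \<omega>
       = indicator A (\<pi> \<omega>) *
         cond_prob M (gen_alg M (\<lambda>\<omega>. (X i \<omega>, Yh i \<omega>)) (Xs \<Otimes>\<^sub>M Yhs))
           {\<omega> \<in> space M. X (Suc i) \<omega> \<in> B} \<omega>"
  proof (intro ballI)
  fix i A B assume i: "i \<in> {1..<n}" and A: "A \<in> sets (prob_algebra Ws)" and B: "B \<in> sets Xs"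
  interpret prob_space M by (rule M)
  obtain g where g: "g \<in> measurable Zsp (prob_algebra Ws)" and gpi: "\<And>\<omega>. \<omega> \<in> space M \<Longrightarrow> \<pi> \<omega> = g (Z \<omega>)"
    using pi_fun by blast
  have iI: "i \<in> {1..i}" "i \<in> {1..n}" "Suc i \<in> {2..n}" using i by auto
  have Xj: "\<And>j. j \<in> {1..i} \<Longrightarrow> X j \<in> measurable M Xs" using i X by auto
  have Yj: "\<And>j. j \<in> {1..i} \<Longrightarrow> Y j \<in> measurable M Ys" using i Y by auto
  have Yhj: "\<And>j. j \<in> {1..i} \<Longrightarrow> Yh j \<in> measurable M Yhs" using i Yh by auto
  have rX: "(\<lambda>\<omega>. restrict (\<lambda>j. X j \<omega>) {1..i}) \<in> measurable M (PiM {1..i} (\<lambda>_. Xs))"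
    by (rule measurable_restrict) (rule Xj)
  have rY: "(\<lambda>\<omega>. restrict (\<lambda>j. Y j \<omega>) {1..i}) \<in> measurable M (PiM {1..i} (\<lambda>_. Ys))"
    by (rule measurable_restrict) (rule Yj)
  have rYh: "(\<lambda>\<omega>. restrict (\<lambda>j. Yh j \<omega>) {1..i}) \<in> measurable M (PiM {1..i} (\<lambda>_. Yhs))"
    by (rule measurable_restrict) (rule Yhj)
  have pim: "\<pi> \<in> measurable M (prob_algebra Ws)"
    by (rule measurable_cong[THEN iffD1, rotated, OF measurable_compose[OF Z g]]) (simp add: gpi)
  let ?hH = "\<lambda>\<omega>. (W \<omega>, Z \<omega>, restrict (\<lambda>j. X j \<omega>) {1..i},
                             restrict (\<lambda>j. Y j \<omega>) {1..i}, restrict (\<lambda>j. Yh j \<omega>) {1..i})"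
  let ?NH = "Ws \<Otimes>\<^sub>M Zsp \<Otimes>\<^sub>M PiM {1..i} (\<lambda>_. Xs) \<Otimes>\<^sub>M PiM {1..i} (\<lambda>_. Ys)
                \<Otimes>\<^sub>M PiM {1..i} (\<lambda>_. Yhs)"
  let ?hG = "\<lambda>\<omega>. (\<pi> \<omega>, restrict (\<lambda>j. X j \<omega>) {1..i}, restrict (\<lambda>j. Yh j \<omega>) {1..i})"
  let ?NG = "prob_algebra Ws \<Otimes>\<^sub>M PiM {1..i} (\<lambda>_. Xs) \<Otimes>\<^sub>M PiM {1..i} (\<lambda>_. Yhs)"
  let ?hG2 = "\<lambda>\<omega>. (X i \<omega>, Yh i \<omega>)"
  let ?NG2 = "Xs \<Otimes>\<^sub>M Yhs"
  let ?H = "vimage_algebra (space M) ?hH ?NH"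
  let ?G = "vimage_algebra (space M) ?hG ?NG"
  let ?G2 = "vimage_algebra (space M) ?hG2 ?NG2"
  have hHm: "?hH \<in> measurable M ?NH"
    using W Z rX rY rYh by (intro measurable_Pair) auto
  have hGm: "?hG \<in> measurable M ?NG"
    using pim rX rYh by (intro measurable_Pair) auto
  have hG2m: "?hG2 \<in> measurable M ?NG2"
    using X Yh iI by (intro measurable_Pair) auto
  have sH: "sigma_finite_subalgebra M ?H" by (rule sfs_vimage[OF M hHm])
  have sG: "sigma_finite_subalgebra M ?G" by (rule sfs_vimage[OF M hGm])
  have sG2: "sigma_finite_subalgebra M ?G2" by (rule sfs_vimage[OF M hG2m])
  have c1: "(\<lambda>x. x i) \<in> measurable (PiM {1..i} (\<lambda>_. Xs)) Xs"
    by (rule measurable_component_singleton) (use iI in simp)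
  have c2: "(\<lambda>x. x i) \<in> measurable (PiM {1..i} (\<lambda>_. Yhs)) Yhs"
    by (rule measurable_component_singleton) (use iI in simp)
  have GH: "sets ?G \<subseteq> sets ?H"
  proof (rule vimage_sub, rule vimage_meas[OF hHm, where \<phi>="\<lambda>p. (g (fst (snd p)), fst (snd (snd p)), snd (snd (snd (snd p))))"])
    show "(\<lambda>p. (g (fst (snd p)), fst (snd (snd p)), snd (snd (snd (snd p))))) \<in> ?NH \<rightarrow>\<^sub>M ?NG"
      using g by measurable
  qed (simp add: gpi)
  have G2H: "sets ?G2 \<subseteq> sets ?H"
  proof (rule vimage_sub, rule vimage_meas[OF hHm, where \<phi>="\<lambda>p. (fst (snd (snd p)) i, snd (snd (snd (snd p))) i)"])
    show "(\<lambda>p. (fst (snd (snd p)) i, snd (snd (snd (snd p))) i)) \<in> ?NH \<rightarrow>\<^sub>M ?NG2"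
      using c1 c2 by measurable
  qed (use iI in simp)
  have Km: "(\<lambda>p. measure (K (Suc i) p) B) \<in> borel_measurable ?NG2"
    by (rule measurable_compose[OF K[OF iI(3)] measurable_measure_prob_algebra[OF B]])
  let ?k = "\<lambda>\<omega>. measure (K (Suc i) (X i \<omega>, Yh i \<omega>)) B"
  have kG2: "?k \<in> borel_measurable ?G2"
    by (rule vimage_meas[OF hG2m Km]) simp
  have kG: "?k \<in> borel_measurable ?G"
  proof (rule vimage_meas[OF hGm, where \<phi>="\<lambda>p. measure (K (Suc i) (fst (snd p) i, snd (snd p) i)) B"])
    show "(\<lambda>p. measure (K (Suc i) (fst (snd p) i, snd (snd p) i)) B) \<in> borel_measurable ?NG"
      using measurable_compose[OF _ Km, of "\<lambda>p. (fst (snd p) i, snd (snd p) i)" ?NG] c1 c2 by measurable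
  qed (use iI in simp)
  let ?D = "{\<omega> \<in> space M. \<pi> \<omega> \<in> A}"
  have piG: "\<pi> \<in> measurable ?G (prob_algebra Ws)"
    by (rule vimage_meas[OF hGm, where \<phi>=fst]) auto
  have DG: "?D \<in> sets ?G"
    using measurable_sets[OF piG A] by (simp add: Int_commute Collect_conj_eq vimage_def Collect_mem_eq)
  have SG2: "space M \<in> sets ?G2" using sets.top[of ?G2] by simp
  let ?E = "{\<omega> \<in> space M. X (Suc i) \<omega> \<in> B}"
  have EM: "?E \<in> sets M" using X[of "Suc i"] i B by (auto intro: measurable_sets_Collect)
  have AEk: "AE x in M. real_cond_exp M ?H (indicator ?E) x = ?k x"
    using Xlaw[OF i B] unfolding cond_prob_def gen_alg_def .
  have r1: "AE x in M. real_cond_exp M ?G (\<lambda>x. indicator ?D x * indicator ?E x) x = indicator ?D x * ?k x"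
    by (rule key[OF sG sH GH M EM AEk kG DG])
  have r2: "AE x in M. real_cond_exp M ?G2 (\<lambda>x. indicator (space M) x * indicator ?E x) x = indicator (space M) x * ?k x"
    by (rule key[OF sG2 sH G2H M EM AEk kG2 SG2])
  have f1: "(\<lambda>x. indicator ?D x * indicator ?E x :: real) = indicator {\<omega> \<in> space M. \<pi> \<omega> \<in> A \<and> X (Suc i) \<omega> \<in> B}"
    by (auto simp: indicator_def fun_eq_iff)
  have f2: "(\<lambda>x. indicator (space M) x * indicator ?E x :: real) = indicator ?E"
    by (auto simp: indicator_def fun_eq_iff)
  show "AE \<omega> in M.
         cond_prob M
           (gen_alg M (\<lambda>\<omega>. (\<pi> \<omega>, restrict (\<lambda>j. X j \<omega>) {1..i}, restrict (\<lambda>j. Yh j \<omega>) {1..i}))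
              (prob_algebra Ws \<Otimes>\<^sub>M PiM {1..i} (\<lambda>_. Xs) \<Otimes>\<^sub>M PiM {1..i} (\<lambda>_. Yhs)))
           {\<omega> \<in> space M. \<pi> \<omega> \<in> A \<and> X (Suc i) \<omega> \<in> B} \<omega>
       = indicator A (\<pi> \<omega>) *
         cond_prob M (gen_alg M (\<lambda>\<omega>. (X i \<omega>, Yh i \<omega>)) (Xs \<Otimes>\<^sub>M Yhs))
           {\<omega> \<in> space M. X (Suc i) \<omega> \<in> B} \<omega>"
    using r1 r2 unfolding cond_prob_def gen_alg_def f1 f2
    by eventually_elim (auto simp: indicator_def)
qed

end
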